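(* Consider $\Sigma:\ \dot x=-(A-M)x+d$ and assume $-(A-M)$ is Hurwitz. If $\Sigma$ is $\gamma$-robust for some $\gamma>0$, then for every cycle in the graph $\mathcal{G}(MA^{-1})$, its weight $w$ satisfies $w<1$ and $$\frac{1}{1-w}\le a_i\gamma$$ for every node $i$ belonging to the cycle.
   Context: Fix $N\in\mathbb{N}$. $A=\mathrm{diag}(a_1,\dots,a_N)$ with all $a_i>0$, and $M\in\mathbb{R}^{N\times N}$ has zero diagonal and nonnegative off-diagonal entries $m_{ij}=(M)_{ij}$. For $\gamma>0$, $\Sigma$ is called $\gamma$-robust if $-(A-M)$ is Hurwitz and for every bounded disturbance $d$, the solution with $x(0)=0$ satisfies $\max_{i}|x_i(t)|\le\gamma\max_i\sup_{s\ge0}|d_i(s)|$ for all $t\ge0$. The directed weighted graph $\mathcal{G}(MA^{-1})$ has vertex set $\{1,\dots,N\}$ and an edge $(p,q)$ iff $m_{pq}>0$, with weight $m_{pq}/a_q$. A walk of length $k\ge1$ from $i$ to $j$ is a sequence $(i_0,\dots,i_k)$ with $i_0=i$, $i_k=j$ and $m_{i_{l+1}i_l}>0$ for all $l$; its weight is $\prod_{l=0}^{k-1} m_{i_{l+1}i_l}/a_{i_l}$. A cycle is a walk $(i_0,\dots,i_k)$, $k\ge1$, with $i_0=i_k$ and $i_0,\dots,i_{k-1}$ pairwise distinct; its nodes are $i_0,\dots,i_{k-1}$. *)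

theory Defs
  imports "HOL-Analysis.Analysis"
begin

definition diag_mat :: "('n::finite \<Rightarrow> real) \<Rightarrow> real^'n^'n" where
  "diag_mat a = (\<chi> i j. if i = j then a i else 0)"

definition hurwitz :: "real^'n::finite^'n \<Rightarrow> bool" where
  "hurwitz B \<longleftrightarrow>
     (\<forall>z::complex. det (mat z - (\<chi> i j. complex_of_real (B $ i $ j))) = 0 \<longrightarrow> Re z < 0)"

text \<open>x is a (Caratheodory) solution on [0,oo) of x' = B x + d with x(0) = 0.\<close>
definition is_solution :: "real^'n::finite^'n \<Rightarrow> (real \<Rightarrow> real^'n) \<Rightarrow> (real \<Rightarrow> real^'n) \<Rightarrow> bool" where
  "is_solution B d x \<longleftrightarrow> x 0 = 0 \<and>
     (\<forall>t\<ge>0. ((\<lambda>s. B *v x s + d s) has_integral x t) {0..t})"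

definition gamma_robust :: "('n::finite \<Rightarrow> real) \<Rightarrow> real^'n^'n \<Rightarrow> real \<Rightarrow> bool" where
  "gamma_robust a M \<gamma> \<longleftrightarrow> hurwitz (- (diag_mat a - M)) \<and>
     (\<forall>d x c. (\<forall>s\<ge>0. \<forall>i. \<bar>d s $ i\<bar> \<le> c) \<longrightarrow> is_solution (- (diag_mat a - M)) d x \<longrightarrow>
        (\<forall>t\<ge>0. \<forall>i. \<bar>x t $ i\<bar> \<le> \<gamma> * c))"

text \<open>A cycle of length k in G(M A^{-1}), given by nodes p 0, ..., p k.\<close>
definition is_cycle :: "real^'n::finite^'n \<Rightarrow> (nat \<Rightarrow> 'n) \<Rightarrow> nat \<Rightarrow> bool" where
  "is_cycle M p k \<longleftrightarrow> k \<ge> 1 \<and> p 0 = p k \<and> inj_on p {0..<k} \<and>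
     (\<forall>l<k. M $ p (Suc l) $ p l > 0)"

definition walk_weight :: "('n::finite \<Rightarrow> real) \<Rightarrow> real^'n^'n \<Rightarrow> (nat \<Rightarrow> 'n) \<Rightarrow> nat \<Rightarrow> real" where
  "walk_weight a M p k = (\<Prod>l<k. M $ p (Suc l) $ p l / a (p l))"

end

theory Submission
  imports Defs "HOL-Real_Asymp.Real_Asymp"
begin


lemma det_of_real_mat:
  fixes X :: "real^'n::finite^'n"
  shows "det (\<chi> i j. complex_of_real (X$i$j)) = complex_of_real (det X)"
  unfolding det_def by (simp add: of_real_sum of_real_prod)

lemma continuous_on_det:
  fixes F :: "real \<Rightarrow> real^'n::finite^'n"
  assumes "\<And>i j. continuous_on S (\<lambda>s. F s $ i $ j)"
  shows "continuous_on S (\<lambda>s. det (F s))"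
  unfolding det_def
  by (intro continuous_intros assms)

lemma continuous_on_Min_fin:
  fixes f :: "'n::finite \<Rightarrow> real \<Rightarrow> real"
  assumes "\<And>j. continuous_on S (f j)"
  shows "continuous_on S (\<lambda>s. Min (range (\<lambda>j. f j s)))"
proof -
  have "finite A \<Longrightarrow> A \<noteq> {} \<Longrightarrow> continuous_on S (\<lambda>s. Min ((\<lambda>j. f j s) ` A))" for A :: "'n set"
  proof (induction A rule: finite_ne_induct)
    case (singleton x) then show ?case using assms by simp
  next
    case (insert x F) then show ?case using assms
      by (simp add: continuous_on_min)
  qed
  then show ?thesis by simp
qed



lemma Cmv_comp:
  fixes M :: "real^'n::finite^'n"
  shows "((\<chi> i j. (if i = j then b i else 0) - M$i$j) *v y) $ j = b j * y$j - (\<Sum>m\<in>UNIV. M$j$m * y$m)"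
  by (simp add: matrix_vector_mult_def left_diff_distrib sum_subtractf if_distrib[of "\<lambda>x. x * _"] cong: if_cong)

lemma zero_hit:
  fixes M :: "real^'n::finite^'n"
  assumes M_nonneg: "\<forall>i j. M $ i $ j \<ge> 0"
    and eq: "(\<chi> i j. (if i = j then b i else 0) - M$i$j) *v y = (\<chi> i. 1)"
    and nn: "\<forall>j. y$j \<ge> 0"
  shows "y$j > 0"
proof (rule ccontr)
  assume "\<not> y$j > 0"
  with nn have y0: "y$j = 0" by (metis order.not_eq_order_implies_strict)
  have "1 = b j * y$j - (\<Sum>m\<in>UNIV. M$j$m * y$m)"
    using arg_cong[OF eq, of "\<lambda>v. v$j"] by (simp add: Cmv_comp)
  also have "\<dots> = - (\<Sum>m\<in>UNIV. M$j$m * y$m)" using y0 by simp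
  also have "\<dots> \<le> 0" using M_nonneg nn by (simp add: sum_nonneg)
  finally show False by simp
qed

lemma large_s_pos:
  fixes M :: "real^'n::finite^'n"
  assumes M_nonneg: "\<forall>i j. M $ i $ j \<ge> 0"
    and dom: "\<forall>j. b j > (\<Sum>m\<in>UNIV. M$j$m)"
    and eq: "(\<chi> i j. (if i = j then b i else 0) - M$i$j) *v y = (\<chi> i. 1)"
  shows "y$j > 0"
proof -
  obtain j0 where j0: "y$j0 = Min (range (\<lambda>m. y$m))"
    proof - have "Min (range (\<lambda>m. y$m)) \<in> range (\<lambda>m. y$m)" by (rule Min_in) auto then show ?thesis using that by (metis imageE) qed
  have minle: "y$j0 \<le> y$m" for m using j0 by simp
  have "1 = b j0 * y$j0 - (\<Sum>m\<in>UNIV. M$j0$m * y$m)"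
    using arg_cong[OF eq, of "\<lambda>v. v$j0"] by (simp add: Cmv_comp)
  also have "\<dots> \<le> b j0 * y$j0 - (\<Sum>m\<in>UNIV. M$j0$m * y$j0)"
    using M_nonneg minle by (intro diff_left_mono sum_mono mult_left_mono) auto
  also have "\<dots> = (b j0 - (\<Sum>m\<in>UNIV. M$j0$m)) * y$j0"
    by (simp add: sum_distrib_right left_diff_distrib)
  finally have "0 < (b j0 - (\<Sum>m\<in>UNIV. M$j0$m)) * y$j0" by simp
  moreover have "b j0 - (\<Sum>m\<in>UNIV. M$j0$m) > 0" using dom by simp
  ultimately have "y$j0 > 0" by (simp add: zero_less_mult_iff)
  then show ?thesis using minle[of j] by simp
qed



lemma pos_sol:
  fixes a :: "'n::finite \<Rightarrow> real" and M :: "real^'n^'n"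
  assumes a_pos: "\<forall>i. a i > 0"
    and M_nonneg: "\<forall>i j. M $ i $ j \<ge> 0"
    and hurw: "hurwitz (- (diag_mat a - M))"
  shows "\<exists>v. (diag_mat a - M) *v v = (\<chi> i. 1) \<and> (\<forall>j. v$j > 0)"
proof -
  define C where "C s = (\<chi> i j. (if i = j then a i + s else 0) - M$i$j)" for s :: real
  have detnz: "det (C s) \<noteq> 0" if s: "s \<ge> 0" for s
  proof
    assume d: "det (C s) = 0"
    have "mat (complex_of_real s) - (\<chi> i j. complex_of_real ((- (diag_mat a - M)) $ i $ j))
          = (\<chi> i j. complex_of_real (C s $ i $ j))"
      by (simp add: vec_eq_iff mat_def diag_mat_def C_def)
    then have "det (mat (complex_of_real s) - (\<chi> i j. complex_of_real ((- (diag_mat a - M)) $ i $ j))) = 0"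
      using d by (simp add: det_of_real_mat)
    with hurw have "Re (complex_of_real s) < 0" unfolding hurwitz_def by blast
    with s show False by simp
  qed
  define v where "v s = (\<chi> k. det (\<chi> i j. if j = k then 1 else C s $ i $ j) / det (C s))" for s
  have sol: "C s *v v s = (\<chi> i. 1)" if "s \<ge> 0" for s
    unfolding v_def by (subst cramer[OF detnz[OF that]]) (simp only: vec_lambda_beta)
  define s0 where "s0 = (\<Sum>j\<in>UNIV. \<Sum>m\<in>UNIV. M$j$m)"
  have rowle: "(\<Sum>m\<in>UNIV. M$j$m) \<le> s0" for j
    unfolding s0_def using M_nonneg
    by (intro member_le_sum[of j UNIV "\<lambda>j. \<Sum>m\<in>UNIV. M$j$m"]) (auto intro: sum_nonneg)
  have s0: "s0 \<ge> 0" unfolding s0_def using M_nonneg by (auto intro: sum_nonneg)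
  have pos0: "v s0 $ j > 0" for j
  proof (rule large_s_pos[OF M_nonneg, of "\<lambda>i. a i + s0"])
    show "\<forall>j. a j + s0 > (\<Sum>m\<in>UNIV. M$j$m)"
    proof
      fix j
      have "(\<Sum>m\<in>UNIV. M$j$m) \<le> s0" "a j > 0" using rowle a_pos by auto
      then show "a j + s0 > (\<Sum>m\<in>UNIV. M$j$m)" by linarith
    qed
    show "(\<chi> i j. (if i = j then a i + s0 else 0) - M $ i $ j) *v v s0 = (\<chi> i. 1)"
      using sol[OF s0] by (simp add: C_def)
  qed
  define g where "g s = Min (range (\<lambda>j. v s $ j))" for s
  have contv: "continuous_on {0..s0} (\<lambda>s. v s $ j)" for j
  proof -
    have "continuous_on {0..s0} (\<lambda>s. det (\<chi> i j'. if j' = j then 1 else C s $ i $ j') / det (C s))"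
    proof (rule continuous_on_divide)
      show "continuous_on {0..s0} (\<lambda>s. det (\<chi> i j'. if j' = j then 1 else C s $ i $ j'))"
        apply (rule continuous_on_det) apply (simp only: vec_lambda_beta)
        subgoal for i ja by (cases "ja = j"; cases "i = ja"; simp add: C_def continuous_on_const continuous_on_add continuous_on_diff continuous_on_id)
        done
      show "continuous_on {0..s0} (\<lambda>s. det (C s))"
        apply (rule continuous_on_det)
        subgoal for i ja by (cases "i = ja"; simp add: C_def continuous_on_const continuous_on_add continuous_on_diff continuous_on_id)
        done
      show "\<forall>x\<in>{0..s0}. det (C x) \<noteq> 0" using detnz by auto
    qed
    then show ?thesis by (simp add: v_def)
  qed
  have contg: "continuous_on {0..s0} g"
    unfolding g_def by (rule continuous_on_Min_fin[OF contv])
  have gs0: "g s0 > 0" unfolding g_def using pos0 by (simp add: Min_gr_iff)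
  have g0: "g 0 > 0"
  proof (rule ccontr)
    assume "\<not> g 0 > 0"
    then have "g 0 \<le> 0" by simp
    from IVT'[of g 0 0 s0, OF this _ s0 contg] gs0
    obtain s where s: "0 \<le> s" "s \<le> s0" "g s = 0" by auto
    have nn: "\<forall>j. v s $ j \<ge> 0"
    proof
      fix j
      have "g s \<le> v s $ j" unfolding g_def by (rule Min_le) auto
      with s(3) show "v s $ j \<ge> 0" by simp
    qed
    have "\<forall>j. v s $ j > 0"
      using zero_hit[OF M_nonneg _ nn, of "\<lambda>i. a i + s"] sol[OF s(1)] by (simp add: C_def)
    then have "g s > 0" unfolding g_def by (simp add: Min_gr_iff)
    with s(3) show False by simp
  qed
  have "C 0 = diag_mat a - M" by (simp add: C_def diag_mat_def vec_eq_iff)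
  moreover have "\<forall>j. v 0 $ j > 0"
  proof
    fix j
    have "g 0 \<le> v 0 $ j" unfolding g_def by (rule Min_le) auto
    with g0 show "v 0 $ j > 0" by simp
  qed
  ultimately show ?thesis using sol[of 0] by auto
qed



lemma lim_aux:
  fixes \<epsilon> y :: real
  assumes "\<epsilon> > 0"
  shows "(\<lambda>n::nat. \<bar>(1 - exp (-(\<epsilon> * real n))) * y\<bar>) \<longlonglongrightarrow> \<bar>y\<bar>"
proof -
  have "(\<lambda>n::nat. exp (-(\<epsilon> * real n))) \<longlonglongrightarrow> 0" using assms by real_asymp
  then have "(\<lambda>n::nat. \<bar>(1 - exp (-(\<epsilon> * real n))) * y\<bar>) \<longlonglongrightarrow> \<bar>(1 - 0) * y\<bar>"
    by (intro tendsto_intros)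
  then show ?thesis by simp
qed

lemma robust_bound:
  fixes a :: "'n::finite \<Rightarrow> real" and M :: "real^'n^'n"
  assumes robust: "gamma_robust a M \<gamma>" and gpos: "\<gamma> > 0"
    and eq: "(diag_mat a - M) *v v = (\<chi> i. 1)"
  shows "\<bar>v$i\<bar> \<le> \<gamma>"
proof -
  define B where "B = - (diag_mat a - M)"
  have key: "\<bar>v$i\<bar> \<le> \<gamma> * (\<epsilon> * norm v + 1)" if ep: "\<epsilon> > 0" for \<epsilon>
  proof -
    define x where "x t = (1 - exp (-(\<epsilon> * t))) *\<^sub>R v" for t
    define d where "d t = (\<epsilon> * exp (-(\<epsilon> * t))) *\<^sub>R v + (1 - exp (-(\<epsilon> * t))) *\<^sub>R (\<chi> i. (1::real))" for t
    have Bx: "B *v x s + d s = (\<epsilon> * exp (-(\<epsilon> * s))) *\<^sub>R v" for s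
    proof -
      have "B *v x s = - ((1 - exp (-(\<epsilon> * s))) *\<^sub>R ((diag_mat a - M) *v v))"
      proof -
        have "B *v v = - ((diag_mat a - M) *v v)"
          unfolding B_def by (simp add: vec_eq_iff matrix_vector_mult_def sum_negf[symmetric] algebra_simps)
        then show ?thesis unfolding x_def by (simp add: matrix_vector_mult_scaleR)
      qed
      then show ?thesis using eq by (simp add: d_def)
    qed
    have sol: "is_solution B d x"
      unfolding is_solution_def
    proof (intro conjI allI impI)
      show "x 0 = 0" by (simp add: x_def)
      fix t :: real assume t: "t \<ge> 0"
      have "((\<lambda>s. (\<epsilon> * exp (-(\<epsilon> * s))) *\<^sub>R v) has_integral (x t - x 0)) {0..t}"
      proof (rule fundamental_theorem_of_calculus[OF t])
        fix s assume "s \<in> {0..t}"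
        have "((\<lambda>s. 1 - exp (-(\<epsilon> * s))) has_field_derivative \<epsilon> * exp (-(\<epsilon> * s))) (at s within {0..t})"
          by (rule derivative_eq_intros refl | simp)+
        from has_vector_derivative_scaleR[OF this has_vector_derivative_const[of v]]
        show "(x has_vector_derivative (\<epsilon> * exp (-(\<epsilon> * s))) *\<^sub>R v) (at s within {0..t})"
          unfolding x_def by simp
      qed
      then show "((\<lambda>s. B *v x s + d s) has_integral x t) {0..t}"
        unfolding Bx by (simp add: x_def)
    qed
    have dbound: "\<forall>s\<ge>0. \<forall>j. \<bar>d s $ j\<bar> \<le> \<epsilon> * norm v + 1"
    proof (intro allI impI)
      fix s :: real and j assume s: "s \<ge> 0"
      define e where "e = exp (-(\<epsilon> * s))"
      have e: "0 < e" "e \<le> 1" using s ep by (auto simp: e_def)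
      have "\<bar>d s $ j\<bar> = \<bar>\<epsilon> * e * v$j + (1 - e)\<bar>" by (simp add: d_def e_def)
      also have "\<dots> \<le> \<epsilon> * e * \<bar>v$j\<bar> + (1 - e)"
        using e ep by (simp add: abs_mult abs_triangle_ineq order_trans[OF abs_triangle_ineq])
      also have "\<dots> \<le> \<epsilon> * \<bar>v$j\<bar> + 1"
      proof -
        have "e * \<bar>v$j\<bar> \<le> \<bar>v$j\<bar>" using e by (simp add: mult_left_le_one_le)
        then have "\<epsilon> * (e * \<bar>v$j\<bar>) \<le> \<epsilon> * \<bar>v$j\<bar>" using ep by (simp add: mult_left_mono)
        then show ?thesis using e by (simp add: mult.assoc)
      qed
      also have "\<dots> \<le> \<epsilon> * norm v + 1"
        using ep component_le_norm_cart[of v j] by simp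
      finally show "\<bar>d s $ j\<bar> \<le> \<epsilon> * norm v + 1" .
    qed
    have xb: "\<forall>t\<ge>0. \<forall>j. \<bar>x t $ j\<bar> \<le> \<gamma> * (\<epsilon> * norm v + 1)"
      using robust dbound sol unfolding gamma_robust_def B_def by blast
    show ?thesis
    proof (rule LIMSEQ_le_const2[OF lim_aux[OF ep, of "v$i"]])
      show "\<exists>N. \<forall>n\<ge>N. \<bar>(1 - exp (- (\<epsilon> * real n))) * v $ i\<bar> \<le> \<gamma> * (\<epsilon> * norm v + 1)"
        using xb by (auto simp: x_def)
    qed
  qed
  show ?thesis
  proof (rule field_le_epsilon)
    fix e :: real assume e: "e > 0"
    define \<epsilon> where "\<epsilon> = e / (\<gamma> * (norm v + 1))"
    have ep: "\<epsilon> > 0" proof -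
      have "norm v + 1 > 0" by (simp add: add_nonneg_pos)
      then have "\<gamma> * (norm v + 1) > 0" using gpos by simp
      then show ?thesis using e by (simp add: \<epsilon>_def)
    qed
    have "\<gamma> * (\<epsilon> * norm v + 1) = \<gamma> + e * (norm v / (norm v + 1))"
    proof -
      have "1 + norm v > 0" by (simp add: add_pos_nonneg)
      then have "1 + norm v \<noteq> 0" "norm v + 1 \<noteq> 0" by auto
      have "\<gamma> * \<epsilon> = e / (norm v + 1)" using gpos by (simp add: \<epsilon>_def)
      then have "\<gamma> * (\<epsilon> * norm v + 1) = e / (norm v + 1) * norm v + \<gamma>"
        by (simp add: distrib_left mult.assoc[symmetric])
      then show ?thesis by simp
    qed
    also have "\<dots> \<le> \<gamma> + e"
    proof -
      have "norm v + 1 > 0" by (simp add: add_nonneg_pos)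
      then have "norm v / (norm v + 1) \<le> 1" by (simp add: divide_le_eq)
      then have "e * (norm v / (norm v + 1)) \<le> e * 1" using e by (intro mult_left_mono) auto
      then show ?thesis by simp
    qed
    finally show "\<bar>v$i\<bar> \<le> \<gamma> + e" using key[OF ep] by linarith
  qed
qed



lemma step_ineq:
  fixes a :: "'n::finite \<Rightarrow> real" and M :: "real^'n^'n"
  assumes a_pos: "\<forall>i. a i > 0" and M_nonneg: "\<forall>i j. M $ i $ j \<ge> 0"
    and eq: "(diag_mat a - M) *v v = (\<chi> i. 1)" and vpos: "\<forall>j. v$j > 0"
  shows "v$j \<ge> 1 / a j + M$j$m / a j * v$m"
proof -
  have dm: "diag_mat a - M = (\<chi> i j. (if i = j then a i else 0) - M$i$j)"
    by (simp add: diag_mat_def vec_eq_iff)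
  have "1 = a j * v$j - (\<Sum>m\<in>UNIV. M$j$m * v$m)"
    using arg_cong[OF eq, of "\<lambda>x. x$j"] unfolding dm by (simp add: Cmv_comp)
  moreover have "M$j$m * v$m \<le> (\<Sum>m\<in>UNIV. M$j$m * v$m)"
  proof (rule member_le_sum)
    fix x show "0 \<le> M$j$x * v$x" using M_nonneg vpos[rule_format, of x] by simp
  qed auto
  ultimately have "1 + M$j$m * v$m \<le> a j * v$j" by linarith
  then have "(1 + M$j$m * v$m) / a j \<le> v$j" using a_pos[rule_format, of j]
    by (simp add: divide_le_eq mult.commute)
  then show ?thesis by (simp add: add_divide_distrib)
qed

lemma chain:
  fixes a :: "'n::finite \<Rightarrow> real" and M :: "real^'n^'n" and q :: "nat \<Rightarrow> 'n"
  assumes a_pos: "\<forall>i. a i > 0" and M_nonneg: "\<forall>i j. M $ i $ j \<ge> 0"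
    and eq: "(diag_mat a - M) *v v = (\<chi> i. 1)" and vpos: "\<forall>j. v$j > 0"
    and k: "k \<ge> 1" and qk: "q k = q 0"
  shows "v $ q 0 * (1 - (\<Prod>l<k. M $ q (Suc l) $ q l / a (q (Suc l)))) \<ge> 1 / a (q 0)"
proof -
  define \<beta> where "\<beta> l = M $ q (Suc l) $ q l / a (q (Suc l))" for l
  have bnn: "\<beta> l \<ge> 0" for l using a_pos M_nonneg unfolding \<beta>_def
    by (simp add: less_imp_le)
  have st: "v $ q (Suc n) \<ge> 1 / a (q (Suc n)) + \<beta> n * v $ q n" for n
    unfolding \<beta>_def by (rule step_ineq[OF a_pos M_nonneg eq vpos])
  have ind: "v $ q n \<ge> (\<Prod>l<n. \<beta> l) * v $ q 0" for n
  proof (induction n)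
    case 0 then show ?case by simp
  next
    case (Suc n)
    have "(\<Prod>l<Suc n. \<beta> l) * v $ q 0 = \<beta> n * ((\<Prod>l<n. \<beta> l) * v $ q 0)" by (simp add: mult_ac)
    also have "\<dots> \<le> \<beta> n * v $ q n" using Suc bnn by (simp add: mult_left_mono)
    also have "\<dots> \<le> v $ q (Suc n)"
    proof -
      have "1 / a (q (Suc n)) > 0" using a_pos by simp
      then show ?thesis using st[of n] by linarith
    qed
    finally show ?case .
  qed
  obtain k' where k': "k = Suc k'" using k by (cases k) auto
  have "v $ q k \<ge> 1 / a (q k) + \<beta> k' * v $ q k'" using st[of k'] k' by simp
  moreover have "\<beta> k' * v $ q k' \<ge> \<beta> k' * ((\<Prod>l<k'. \<beta> l) * v $ q 0)"
    using ind[of k'] bnn by (simp add: mult_left_mono)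
  moreover have "\<beta> k' * ((\<Prod>l<k'. \<beta> l) * v $ q 0) = (\<Prod>l<k. \<beta> l) * v $ q 0"
    using k' by (simp add: mult_ac)
  ultimately have "v $ q 0 \<ge> 1 / a (q 0) + (\<Prod>l<k. \<beta> l) * v $ q 0" using qk by simp
  then show ?thesis unfolding \<beta>_def by (simp add: algebra_simps)
qed

lemma prod_window:
  fixes G :: "nat \<Rightarrow> real"
  assumes per: "\<And>n. G (n + k) = G n" and nz: "\<And>n. G n \<noteq> 0"
  shows "(\<Prod>m<k. G (l + m)) = (\<Prod>m<k. G m)"
proof (induction l)
  case 0 then show ?case by simp
next
  case (Suc l)
  have "G l * (\<Prod>m<k. G (l + Suc m)) = (\<Prod>m<Suc k. G (l + m))"
    by (simp add: prod.lessThan_Suc_shift del: prod.lessThan_Suc)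
  also have "\<dots> = (\<Prod>m<k. G (l + m)) * G (l + k)" by simp
  also have "\<dots> = (\<Prod>m<k. G (l + m)) * G l" using per[of l] by simp
  finally have "(\<Prod>m<k. G (l + Suc m)) = (\<Prod>m<k. G (l + m))"
    using nz[of l] by (simp add: mult.commute)
  then show ?case using Suc by simp
qed



theorem mainTheorem3:
  fixes a :: "'n::finite \<Rightarrow> real" and M :: "real^'n^'n" and \<gamma> :: real
  assumes a_pos: "\<forall>i. a i > 0"
    and M_diag: "\<forall>i. M $ i $ i = 0"
    and M_nonneg: "\<forall>i j. M $ i $ j \<ge> 0"
    and hurw: "hurwitz (- (diag_mat a - M))"
    and gamma_pos: "\<gamma> > 0"
    and robust: "gamma_robust a M \<gamma>"
    and cyc: "is_cycle M p k"
  shows "walk_weight a M p k < 1 \<and>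
         (\<forall>l<k. 1 / (1 - walk_weight a M p k) \<le> a (p l) * \<gamma>)"
proof -
  obtain v where eq: "(diag_mat a - M) *v v = (\<chi> i. 1)" and vpos: "\<forall>j. v$j > 0"
    using pos_sol[OF a_pos M_nonneg hurw] by blast
  have vb: "v$j \<le> \<gamma>" for j using robust_bound[OF robust gamma_pos eq, of j] by simp
  from cyc have k1: "k \<ge> 1" and pk: "p k = p 0" and edge: "\<forall>l<k. M $ p (Suc l) $ p l > 0"
    by (auto simp: is_cycle_def)
  define w where "w = walk_weight a M p k"
  define P where "P n = p (n mod k)" for n
  have PSuc: "P (Suc n) = p (Suc (n mod k))" for n
    unfolding P_def using pk by (simp add: mod_Suc)
  define G where "G n = M $ P (Suc n) $ P n / a (P (Suc n))" for n
  have Gper: "G (n + k) = G n" for n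
  proof -
    have "P (n + k) = P n" unfolding P_def by simp
    moreover have "P (Suc (n + k)) = P (Suc n)" unfolding P_def
      by (metis add_Suc mod_add_self2)
    ultimately show ?thesis unfolding G_def by simp
  qed
  have Gnz: "G n \<noteq> 0" for n
  proof -
    have "n mod k < k" using k1 by simp
    then have "M $ P (Suc n) $ P n > 0" using edge PSuc[of n] unfolding P_def by auto
    then show ?thesis unfolding G_def using a_pos[rule_format, of "P (Suc n)"] by simp
  qed
  have ashift: "(\<Prod>m<k. a (p (Suc m))) = (\<Prod>m<k. a (p m))"
  proof -
    have "a (p 0) * (\<Prod>m<k. a (p (Suc m))) = (\<Prod>m<Suc k. a (p m))"
      by (simp add: prod.lessThan_Suc_shift del: prod.lessThan_Suc)
    also have "\<dots> = (\<Prod>m<k. a (p m)) * a (p 0)" using pk by simp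
    finally show ?thesis using a_pos[rule_format, of "p 0"] by (simp add: mult.commute)
  qed
  have Gprod: "(\<Prod>m<k. G m) = w"
  proof -
    have "(\<Prod>m<k. G m) = (\<Prod>m<k. M $ p (Suc m) $ p m / a (p (Suc m)))"
    proof (rule prod.cong)
      fix m assume "m \<in> {..<k}"
      then have "m < k" by simp
      then show "G m = M $ p (Suc m) $ p m / a (p (Suc m))"
        unfolding G_def using PSuc[of m] by (simp add: P_def)
    qed simp
    also have "\<dots> = (\<Prod>m<k. M $ p (Suc m) $ p m) / (\<Prod>m<k. a (p (Suc m)))"
      by (rule prod_dividef)
    also have "\<dots> = (\<Prod>m<k. M $ p (Suc m) $ p m) / (\<Prod>m<k. a (p m))"
      using ashift by simp
    also have "\<dots> = w" unfolding w_def walk_weight_def by (simp add: prod_dividef)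
    finally show ?thesis .
  qed
  have key: "v $ p l * (1 - w) \<ge> 1 / a (p l)" if l: "l < k" for l
  proof -
    define q where "q m = P (l + m)" for m
    have qk: "q k = q 0" unfolding q_def P_def by simp
    have "v $ q 0 * (1 - (\<Prod>m<k. M $ q (Suc m) $ q m / a (q (Suc m)))) \<ge> 1 / a (q 0)"
      by (rule chain[OF a_pos M_nonneg eq vpos k1 qk])
    moreover have "(\<Prod>m<k. M $ q (Suc m) $ q m / a (q (Suc m))) = (\<Prod>m<k. G (l + m))"
      unfolding q_def G_def by simp
    moreover have "(\<Prod>m<k. G (l + m)) = (\<Prod>m<k. G m)"
      by (rule prod_window[where G=G and k=k]) (rule Gper, rule Gnz)
    moreover have "q 0 = p l" unfolding q_def P_def using l by simp
    ultimately show ?thesis using Gprod by simp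
  qed
  have concl: "w < 1 \<and> 1 / (1 - w) \<le> a (p l) * \<gamma>" if l: "l < k" for l
  proof -
    have ap: "a (p l) > 0" using a_pos by simp
    have vp: "v $ p l > 0" using vpos by simp
    have k: "v $ p l * (1 - w) \<ge> 1 / a (p l)" using key[OF l] .
    have "1 / a (p l) > 0" using ap by simp
    then have "v $ p l * (1 - w) > 0" using k by linarith
    then have w1: "1 - w > 0" using vp by (simp add: zero_less_mult_iff)
    have "1 \<le> a (p l) * (v $ p l * (1 - w))" using k ap by (simp add: divide_le_eq mult.commute)
    then have "1 / (1 - w) \<le> a (p l) * v $ p l" using w1 by (simp add: divide_le_eq mult.assoc)
    also have "\<dots> \<le> a (p l) * \<gamma>" using vb ap by (simp add: mult_left_mono)
    finally show ?thesis using w1 by simp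
  qed
  show ?thesis using concl k1 unfolding w_def by (metis less_le_trans zero_less_one le_eq_less_or_eq)
qed

end
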